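(* Let $P>0$, $v\ge2$, $\omega\in(0,1)$, and let $\Gamma'_{T_1},\Gamma'_{T_2},\Gamma'_R,\Gamma''_{T_1},\Gamma''_{T_2}\ge0$. Set $B_i=\Gamma''_{T_i}+2\Gamma'_{T_i}+1$ and $C_i=(\Gamma'_R+1)(\Gamma'_{T_i}+1)$ for $i=1,2$. For $D\in(0,1)$ let $\bar\gamma_1=P(1-D)^{-v}$, $\bar\gamma_2=PD^{-v}$ and $$\mathcal L(\omega,D)=\frac{B_2-B_1}{\bar\gamma_2}+\frac{B_1+C_1}{\omega\bar\gamma_2}+\frac{B_1-B_2}{\bar\gamma_1}+\frac{B_2+C_2}{(1-\omega)\bar\gamma_1}.$$ Then $D\mapsto\mathcal L(\omega,D)$ is strictly convex on $(0,1)$ and its unique minimizer on $(0,1)$ is $$D^{\rm opt}=\frac{1}{\left(\dfrac{\omega(1-\omega)(B_2-B_1)+(1-\omega)(B_1+C_1)}{\omega(1-\omega)(B_1-B_2)+\omega(B_2+C_2)}\right)^{\frac{1}{v-1}}+1}.$$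
   Context: Terminals $T_1,T_2$ at normalized distance $1$ with the relay on the segment between them at distance $1-D$ from $T_1$ and $D$ from $T_2$; $v$ is the path-loss exponent, so the terminal–relay average SNRs are $\bar\gamma_1=P(1-D)^{-v}$, $\bar\gamma_2=PD^{-v}$. $\mathcal L$ is (up to a positive factor) the high-SNR asymptotic protocol outage probability, $\omega$ the relay power-allocation coefficient, and $\Gamma'_N,\Gamma''_N$ the first and second moments of the interference power at node $N$. *)

theory Defs
  imports "HOL-Analysis.Analysis"
begin

definition strictly_convex_on :: "real set \<Rightarrow> (real \<Rightarrow> real) \<Rightarrow> bool" where
  "strictly_convex_on S f \<longleftrightarrow> convex S \<and>
     (\<forall>x\<in>S. \<forall>y\<in>S. x \<noteq> y \<longrightarrow> (\<forall>u. 0 < u \<and> u < 1 \<longrightarrow>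
        f (u * x + (1 - u) * y) < u * f x + (1 - u) * f y))"

definition gbar1 :: "real \<Rightarrow> real \<Rightarrow> real \<Rightarrow> real" where
  "gbar1 P v D = P * (1 - D) powr (- v)"

definition gbar2 :: "real \<Rightarrow> real \<Rightarrow> real \<Rightarrow> real" where
  "gbar2 P v D = P * D powr (- v)"

definition Lobj :: "real \<Rightarrow> real \<Rightarrow> real \<Rightarrow> real \<Rightarrow> real \<Rightarrow> real \<Rightarrow> real \<Rightarrow> real \<Rightarrow> real" where
  "Lobj P v B1 B2 C1 C2 \<omega> D =
     (B2 - B1) / gbar2 P v D + (B1 + C1) / (\<omega> * gbar2 P v D)
   + (B1 - B2) / gbar1 P v D + (B2 + C2) / ((1 - \<omega>) * gbar1 P v D)"

end

theory Submission
  imports Defs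
begin

lemma sc_lt:
  fixes f f' :: "real \<Rightarrow> real"
  assumes der: "\<And>x. 0 < x \<Longrightarrow> x < 1 \<Longrightarrow> (f has_real_derivative f' x) (at x)"
    and mono: "\<And>x y. 0 < x \<Longrightarrow> x < y \<Longrightarrow> y < 1 \<Longrightarrow> f' x < f' y"
    and xy: "0 < x" "x < y" "y < 1" and u: "0 < u" "u < 1"
  shows "f (u * x + (1 - u) * y) < u * f x + (1 - u) * f y"
proof -
  define z where "z = u * x + (1 - u) * y"
  have e1: "z - x = (1 - u) * (y - x)" "y - z = u * (y - x)" unfolding z_def by algebra+
  have xz: "x < z" using e1(1) xy u by (smt (verit) mult_pos_pos)
  have zy: "z < y" using e1(2) xy u by (smt (verit) mult_pos_pos)
  obtain p where p: "x < p" "p < z" "f z - f x = (z - x) * f' p"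
    using MVT2[OF xz, of f f'] der xy zy by force
  obtain q where q: "z < q" "q < y" "f y - f z = (y - z) * f' q"
    using MVT2[OF zy, of f f'] der xy xz by force
  have lt: "f' p < f' q" using mono[of p q] p q xy by linarith
  have "u * f x + (1 - u) * f y - f z = u * (1 - u) * (y - x) * (f' q - f' p)"
  proof -
    have "u * f x + (1 - u) * f y - f z = - u * (f z - f x) + (1 - u) * (f y - f z)"
      by (simp add: algebra_simps)
    also have "\<dots> = - u * ((1 - u) * (y - x) * f' p) + (1 - u) * (u * (y - x) * f' q)"
      using p(3) q(3) e1 by simp
    finally show ?thesis by (simp add: algebra_simps)
  qed
  moreover have "u * (1 - u) * (y - x) * (f' q - f' p) > 0"
    using u xy lt by simp
  ultimately show ?thesis unfolding z_def[symmetric] by linarith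
qed

lemma sc:
  fixes f f' :: "real \<Rightarrow> real"
  assumes der: "\<And>x. 0 < x \<Longrightarrow> x < 1 \<Longrightarrow> (f has_real_derivative f' x) (at x)"
    and mono: "\<And>x y. 0 < x \<Longrightarrow> x < y \<Longrightarrow> y < 1 \<Longrightarrow> f' x < f' y"
  shows "strictly_convex_on {0<..<1} f"
  unfolding strictly_convex_on_def
proof (intro conjI ballI impI allI)
  show "convex {0<..<1::real}" by simp
  fix x y u :: real assume x: "x \<in> {0<..<1}" and y: "y \<in> {0<..<1}" and ne: "x \<noteq> y"
    and u: "0 < u \<and> u < 1"
  show "f (u * x + (1 - u) * y) < u * f x + (1 - u) * f y"
  proof (cases "x < y")
    case True thus ?thesis using sc_lt[OF der mono] x y u by auto
  next
    case False
    hence "y < x" using ne by auto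
    hence "f ((1-u) * y + (1 - (1-u)) * x) < (1-u) * f y + (1 - (1-u)) * f x"
      using sc_lt[OF der mono, of y x "1-u"] x y u by auto
    thus ?thesis by (simp add: algebra_simps)
  qed
qed

lemma minim:
  fixes f f' :: "real \<Rightarrow> real"
  assumes der: "\<And>x. 0 < x \<Longrightarrow> x < 1 \<Longrightarrow> (f has_real_derivative f' x) (at x)"
    and mono: "\<And>x y. 0 < x \<Longrightarrow> x < y \<Longrightarrow> y < 1 \<Longrightarrow> f' x < f' y"
    and d: "0 < d" "d < 1" "f' d = 0" and x: "0 < x" "x < 1" "x \<noteq> d"
  shows "f d < f x"
proof (cases "x < d")
  case True
  obtain p where p: "x < p" "p < d" "f d - f x = (d - x) * f' p"
    using MVT2[OF True, of f f'] der x d by force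
  have "f' p < 0" using mono[of p d] p x d by linarith
  thus ?thesis using p True by (smt (verit) mult_pos_neg)
next
  case False
  hence lt: "d < x" using x by auto
  obtain p where p: "d < p" "p < x" "f x - f d = (x - d) * f' p"
    using MVT2[OF lt, of f f'] der x d by force
  have "f' p > 0" using mono[of d p] p x d by linarith
  thus ?thesis using p lt by (smt (verit) mult_pos_pos)
qed

theorem mainTheorem5:
  fixes P v \<omega> G1' G2' GR' G1'' G2'' :: real
  assumes "P > 0" and "v \<ge> 2" and "0 < \<omega>" and "\<omega> < 1"
    and "G1' \<ge> 0" and "G2' \<ge> 0" and "GR' \<ge> 0" and "G1'' \<ge> 0" and "G2'' \<ge> 0"
  defines "B1 \<equiv> G1'' + 2 * G1' + 1"
    and "B2 \<equiv> G2'' + 2 * G2' + 1"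
    and "C1 \<equiv> (GR' + 1) * (G1' + 1)"
    and "C2 \<equiv> (GR' + 1) * (G2' + 1)"
  defines "Dopt \<equiv> 1 / ((((\<omega> * (1 - \<omega>) * (B2 - B1) + (1 - \<omega>) * (B1 + C1))
                         / (\<omega> * (1 - \<omega>) * (B1 - B2) + \<omega> * (B2 + C2))) powr (1 / (v - 1))) + 1)"
  shows "strictly_convex_on {0<..<1} (\<lambda>D. Lobj P v B1 B2 C1 C2 \<omega> D)
       \<and> Dopt \<in> {0<..<1}
       \<and> (\<forall>D\<in>{0<..<1}. D \<noteq> Dopt \<longrightarrow> Lobj P v B1 B2 C1 C2 \<omega> Dopt < Lobj P v B1 B2 C1 C2 \<omega> D)"
  proof -
  define a where "a = (B2 - B1) + (B1 + C1) / \<omega>"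
  define b where "b = (B1 - B2) + (B2 + C2) / (1 - \<omega>)"
  have B1: "B1 \<ge> 1" and B2: "B2 \<ge> 1" and C1: "C1 \<ge> 1" and C2: "C2 \<ge> 1"
  proof -
    show "B1 \<ge> 1" unfolding B1_def using assms by simp
    show "B2 \<ge> 1" unfolding B2_def using assms by simp
    have "1 * 1 \<le> (GR' + 1) * (G1' + 1)" using assms by (intro mult_mono) auto
    thus "C1 \<ge> 1" unfolding C1_def by simp
    have "1 * 1 \<le> (GR' + 1) * (G2' + 1)" using assms by (intro mult_mono) auto
    thus "C2 \<ge> 1" unfolding C2_def by simp
  qed
  have a_eq: "a = (\<omega> * B2 + (1 - \<omega>) * B1 + C1) / \<omega>"
    unfolding a_def using assms by (simp add: field_simps)
  have b_eq: "b = ((1 - \<omega>) * B1 + \<omega> * B2 + C2) / (1 - \<omega>)"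
    unfolding b_def using assms by (simp add: field_simps)
  have "\<omega> * B2 + (1 - \<omega>) * B1 + C1 > 0" using B1 B2 C1 assms
    by (smt (verit) mult_nonneg_nonneg)
  hence apos: "a > 0" unfolding a_eq using assms by simp
  have "(1 - \<omega>) * B1 + \<omega> * B2 + C2 > 0" using B1 B2 C2 assms
    by (smt (verit) mult_nonneg_nonneg)
  hence bpos: "b > 0" unfolding b_eq using assms by simp
  define F where "F D = (a * D powr v + b * (1 - D) powr v) / P" for D
  define F' where "F' D = v * (a * D powr (v - 1) - b * (1 - D) powr (v - 1)) / P" for D
  have LF: "Lobj P v B1 B2 C1 C2 \<omega> D = F D" if "0 < D" "D < 1" for D
  proof -
    have e1: "1 / (D powr - v) = D powr v" and e2: "1 / ((1 - D) powr - v) = (1 - D) powr v"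
      using that by (simp_all add: powr_minus divide_inverse)
    have "Lobj P v B1 B2 C1 C2 \<omega> D = ((B2 - B1) + (B1 + C1) / \<omega>) * (1 / (D powr - v)) / P
        + ((B1 - B2) + (B2 + C2) / (1 - \<omega>)) * (1 / ((1 - D) powr - v)) / P"
      unfolding Lobj_def gbar1_def gbar2_def using assms that
      by (simp add: field_simps)
    thus ?thesis unfolding F_def e1 e2 a_def[symmetric] b_def[symmetric] by (simp add: add_divide_distrib)
  qed
  have der: "(F has_real_derivative F' x) (at x)" if "0 < x" "x < 1" for x
  proof -
    have "((\<lambda>D. (a * D powr v + b * (1 - D) powr v) / P) has_real_derivative
        (a * (v * x powr (v - 1)) + b * (v * (1 - x) powr (v - 1) * (-1))) / P) (at x)"
      using that assms(1) by (auto intro!: derivative_eq_intros)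
    thus ?thesis unfolding F_def[abs_def] F'_def by (simp add: algebra_simps)
  qed
  have mono: "F' x < F' y" if "0 < x" "x < y" "y < 1" for x y
  proof -
    have v1: "v - 1 > 0" using assms by simp
    have "x powr (v - 1) < y powr (v - 1)" using that v1 by (simp add: powr_less_mono2)
    moreover have "(1 - y) powr (v - 1) < (1 - x) powr (v - 1)" using that v1 by (simp add: powr_less_mono2)
    ultimately have "a * x powr (v - 1) - b * (1 - x) powr (v - 1) < a * y powr (v - 1) - b * (1 - y) powr (v - 1)"
      using apos bpos by (smt (verit) mult_strict_left_mono)
    thus ?thesis unfolding F'_def using assms v1
      by (simp add: divide_strict_right_mono)
  qed
  have scF: "strictly_convex_on {0<..<1} F" by (rule sc[OF der mono])
  have sc1: "strictly_convex_on {0<..<1} (\<lambda>D. Lobj P v B1 B2 C1 C2 \<omega> D)"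
    using scF unfolding strictly_convex_on_def
  proof (intro conjI ballI impI allI)
    fix x y u :: real assume x: "x \<in> {0<..<1}" and y: "y \<in> {0<..<1}" and ne: "x \<noteq> y"
      and u: "0 < u \<and> u < 1"
    have m: "u * x + (1 - u) * y \<in> {0<..<1}"
      using convexD[OF convex_real_interval(8)[of 0 1] x y, of u "1-u"] u by auto
    thus "Lobj P v B1 B2 C1 C2 \<omega> (u * x + (1 - u) * y) < u * Lobj P v B1 B2 C1 C2 \<omega> x + (1 - u) * Lobj P v B1 B2 C1 C2 \<omega> y"
      using scF x y ne u LF unfolding strictly_convex_on_def by auto
  qed simp
  define r where "r = (a / b) powr (1 / (v - 1))"
  have rpos: "r > 0" unfolding r_def using apos bpos by simp
  have ratio: "(\<omega> * (1 - \<omega>) * (B2 - B1) + (1 - \<omega>) * (B1 + C1))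
                         / (\<omega> * (1 - \<omega>) * (B1 - B2) + \<omega> * (B2 + C2)) = a / b"
    unfolding a_def b_def using assms by (simp add: field_simps)
  have Dr: "Dopt = 1 / (r + 1)" unfolding Dopt_def ratio r_def ..
  have D01: "0 < Dopt" "Dopt < 1" unfolding Dr using rpos by auto
  have oneD: "1 - Dopt = r * Dopt" unfolding Dr using rpos by (simp add: field_simps)
  have rv: "r powr (v - 1) = a / b" unfolding r_def using apos bpos assms
    by (simp add: powr_powr)
  have "b * (1 - Dopt) powr (v - 1) = a * Dopt powr (v - 1)"
    unfolding oneD using rpos D01 bpos by (simp add: powr_mult rv)
  hence F'0: "F' Dopt = 0" unfolding F'_def by simp
  show ?thesis
  proof (intro conjI sc1 ballI impI)
    show "Dopt \<in> {0<..<1}" using D01 by simp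
    fix D assume D: "D \<in> {0<..<1}" "D \<noteq> Dopt"
    show "Lobj P v B1 B2 C1 C2 \<omega> Dopt < Lobj P v B1 B2 C1 C2 \<omega> D"
      using minim[OF der mono D01 F'0, of D] D LF D01 by auto
  qed
qed

end
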